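(* Let $K$ be a positive integer and $m$ an integer with $m\equiv K\pmod 2$. Then \[ C_{m,K}^{2K}(q)=\frac{q^{s(m,K,2K)}}{J_{1}^3}\,f_{K+1,K+1,1}\big(q^{K+1},q^{1+\frac{1}{2}(m+K)},q\big). \]
   Context: Let $q=e^{2\pi i\tau}$ with $\operatorname{Im}\tau>0$, and for real $\alpha$ put $q^{\alpha}:=e^{2\pi i\alpha\tau}$. For $x\in\mathbb{C}^*$, $j(x;q):=\sum_{n\in\mathbb{Z}}(-1)^nq^{n(n-1)/2}x^n$, and $J_1:=\prod_{i\ge1}(1-q^i)$. For positive integers $a,b,c$ and $x,y\in\mathbb{C}^*$, the Hecke-type double-sum is $f_{a,b,c}(x,y,q):=\Big(\sum_{r,s\ge0}-\sum_{r,s<0}\Big)(-1)^{r+s}x^ry^sq^{a\binom{r}{2}+brs+c\binom{s}{2}}$. For a positive integer $N$ and integers $m,\ell$ with $0\le\ell\le N$, $m\equiv\ell\pmod 2$, put $s(m,\ell,N):=-\frac18+\frac{(\ell+1)^2}{4(N+2)}-\frac{m^2}{4N}$. The level-$N$ $A_1^{(1)}$ string function is given by $C_{m,\ell}^{N}(q)=\dfrac{q^{s(m,\ell,N)}}{J_1^3}\, f_{1,1+N,1}\big(q^{1+\frac12(m+\ell)},q^{1-\frac12(m-\ell)},q\big)$. *)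

theory Defs
  imports "HOL-Analysis.Analysis"
begin

text \<open>Nome q = exp(2 pi i tau), and real powers q^alpha := exp(2 pi i alpha tau).\<close>
definition nome :: "complex \<Rightarrow> complex" where
  "nome \<tau> = exp (2 * of_real pi * \<i> * \<tau>)"

definition qpow :: "complex \<Rightarrow> real \<Rightarrow> complex" where
  "qpow \<tau> \<alpha> = exp (2 * of_real pi * \<i> * of_real \<alpha> * \<tau>)"

definition J1 :: "complex \<Rightarrow> complex" where
  "J1 q = (\<Prod>i. 1 - q ^ Suc i)"

definition hecke_term :: "int \<Rightarrow> int \<Rightarrow> int \<Rightarrow> complex \<Rightarrow> complex \<Rightarrow> complex \<Rightarrow> int \<times> int \<Rightarrow> complex" where
  "hecke_term a b c x y q = (\<lambda>(r, s).
     (-1) powi (r + s) * x powi r * y powi s *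
     q powi (a * (r * (r - 1) div 2) + b * r * s + c * (s * (s - 1) div 2)))"

definition hecke_f :: "int \<Rightarrow> int \<Rightarrow> int \<Rightarrow> complex \<Rightarrow> complex \<Rightarrow> complex \<Rightarrow> complex" where
  "hecke_f a b c x y q =
     (\<Sum>\<^sub>\<infinity>p\<in>{(r, s). 0 \<le> r \<and> 0 \<le> s}. hecke_term a b c x y q p)
   - (\<Sum>\<^sub>\<infinity>p\<in>{(r, s). r < 0 \<and> s < 0}. hecke_term a b c x y q p)"

definition sfun :: "int \<Rightarrow> int \<Rightarrow> int \<Rightarrow> real" where
  "sfun m l N = - 1/8 + (real_of_int l + 1)^2 / (4 * (real_of_int N + 2)) - (real_of_int m)^2 / (4 * real_of_int N)"

text \<open>Level-N string function C^N_{m,l}(q), as a function of tau.\<close>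
definition string_fn :: "int \<Rightarrow> int \<Rightarrow> int \<Rightarrow> complex \<Rightarrow> complex" where
  "string_fn N m l \<tau> = qpow \<tau> (sfun m l N) / (J1 (nome \<tau>)) ^ 3 *
     hecke_f 1 (1 + N) 1 (qpow \<tau> (1 + (real_of_int m + real_of_int l) / 2))
                         (qpow \<tau> (1 - (real_of_int m - real_of_int l) / 2)) (nome \<tau>)"

end

theory Submission
  imports Defs
begin

lemma term_eq:
  fixes z :: complex
  shows "hecke_term a b c (exp (z * of_real \<alpha>)) (exp (z * of_real \<beta>)) (exp z) (r, s) =
    (-1) powi (r + s) * exp (z * of_real (\<alpha> * of_int r + \<beta> * of_int s
       + of_int a * (of_int r * (of_int r - 1) / 2) + of_int b * of_int r * of_int s
       + of_int c * (of_int s * (of_int s - 1) / 2)))"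
proof -
  have e1: "of_int (r * (r - 1) div 2) = (of_int r * (of_int r - 1) / 2 :: real)"
  proof -
    have "even (r * (r - 1))" by auto
    then have "r * (r - 1) = 2 * (r * (r - 1) div 2)" by auto
    then have "(of_int (r * (r - 1)) :: real) = 2 * of_int (r * (r - 1) div 2)"
      by (metis of_int_mult of_int_numeral)
    then show ?thesis by simp
  qed
  have e2: "of_int (s * (s - 1) div 2) = (of_int s * (of_int s - 1) / 2 :: real)"
  proof -
    have "even (s * (s - 1))" by auto
    then have "s * (s - 1) = 2 * (s * (s - 1) div 2)" by auto
    then have "(of_int (s * (s - 1)) :: real) = 2 * of_int (s * (s - 1) div 2)"
      by (metis of_int_mult of_int_numeral)
    then show ?thesis by simp
  qed
  have "hecke_term a b c (exp (z * of_real \<alpha>)) (exp (z * of_real \<beta>)) (exp z) (r, s) =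
     (-1) powi (r + s) * (exp (of_int r * (z * of_real \<alpha>)) * exp (of_int s * (z * of_real \<beta>)) *
     exp (of_int (a * (r * (r - 1) div 2) + b * r * s + c * (s * (s - 1) div 2)) * z))"
    by (simp add: hecke_term_def exp_power_int mult.assoc)
  also have "exp (of_int r * (z * of_real \<alpha>)) * exp (of_int s * (z * of_real \<beta>)) *
     exp (of_int (a * (r * (r - 1) div 2) + b * r * s + c * (s * (s - 1) div 2)) * z)
     = exp (of_int r * (z * of_real \<alpha>) + of_int s * (z * of_real \<beta>) +
         of_int (a * (r * (r - 1) div 2) + b * r * s + c * (s * (s - 1) div 2)) * z)"
    by (simp add: exp_add)
  also have "of_int r * (z * of_real \<alpha>) + of_int s * (z * of_real \<beta>) +
         of_int (a * (r * (r - 1) div 2) + b * r * s + c * (s * (s - 1) div 2)) * z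
     = z * of_real (\<alpha> * of_int r + \<beta> * of_int s
       + of_int a * (of_int r * (of_int r - 1) / 2) + of_int b * of_int r * of_int s
       + of_int c * (of_int s * (of_int s - 1) / 2))"
  proof -
    have "(of_int (a * (r * (r - 1) div 2) + b * r * s + c * (s * (s - 1) div 2)) :: complex)
       = of_real (of_int (a * (r * (r - 1) div 2) + b * r * s + c * (s * (s - 1) div 2)))"
      by (rule of_real_of_int_eq[symmetric])
    also have "(of_int (a * (r * (r - 1) div 2) + b * r * s + c * (s * (s - 1) div 2)) :: real)
       = of_int a * (of_int r * (of_int r - 1) / 2) + of_int b * of_int r * of_int s
       + of_int c * (of_int s * (of_int s - 1) / 2)"
      by (simp only: of_int_add of_int_mult e1 e2)
    finally show ?thesis by (simp add: algebra_simps)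
  qed
  finally show ?thesis .
qed


lemma quad_aux:
  fixes x p :: real
  shows "x^2 / 2 + p * x - \<bar>x\<bar> \<ge> - ((\<bar>p\<bar> + 1)^2 / 2)"
proof -
  have 1: "p*x \<ge> - (\<bar>p\<bar> * \<bar>x\<bar>)"
    using abs_ge_minus_self[of "p * x"] by (simp add: abs_mult)
  have 2: "0 \<le> (\<bar>x\<bar> - (\<bar>p\<bar> + 1)) * (\<bar>x\<bar> - (\<bar>p\<bar> + 1))" by simp
  have e: "(\<bar>x\<bar> - (\<bar>p\<bar> + 1)) * (\<bar>x\<bar> - (\<bar>p\<bar> + 1))
      = \<bar>x\<bar> * \<bar>x\<bar> - 2 * (\<bar>p\<bar> * \<bar>x\<bar>) - 2 * \<bar>x\<bar> + (\<bar>p\<bar> + 1)^2"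
    by (simp add: power2_eq_square algebra_simps)
  have 3: "x^2 = \<bar>x\<bar> * \<bar>x\<bar>" by (simp add: power2_eq_square)
  show ?thesis using 1 2 3 e by linarith
qed

lemma quad_aux2:
  fixes x p a :: real
  assumes "a \<ge> 1"
  shows "a * (x * (x - 1) / 2) + p * x \<ge> \<bar>x\<bar> - ((\<bar>p - a/2\<bar> + 1)^2 / 2)"
proof -
  have "a * (x * (x - 1) / 2) + p * x = (a - 1) * x^2 / 2 + (x^2 / 2 + (p - a/2)*x)"
    by (simp add: power2_eq_square field_simps)
  moreover have "(a - 1) * x^2 / 2 \<ge> 0" using assms by simp
  moreover note quad_aux[where x=x and p="p - a/2"]
  ultimately show ?thesis by linarith
qed

lemma E_bound:
  fixes \<alpha> \<beta> :: real and a b c r s :: int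
  assumes "a \<ge> 1" "c \<ge> 1" "b \<ge> 0" "r * s \<ge> 0"
  shows "\<alpha> * of_int r + \<beta> * of_int s
       + of_int a * (of_int r * (of_int r - 1) / 2) + of_int b * of_int r * of_int s
       + of_int c * (of_int s * (of_int s - 1) / 2)
       \<ge> abs (of_int r) + abs (of_int s) - ((abs (\<alpha> - of_int a/2) + 1)^2 / 2 + (abs (\<beta> - of_int c/2) + 1)^2 / 2)"
proof -
  have "of_int b * of_int r * of_int s \<ge> (0::real)"
  proof -
    have "0 \<le> b * (r * s)" using assms(3,4) by (rule mult_nonneg_nonneg)
    then have "(0::real) \<le> of_int (b * (r * s))" by (simp only: of_int_0_le_iff)
    then show ?thesis by (simp only: of_int_mult mult.assoc)
  qed
  moreover have "of_int a * (of_int r * (of_int r - 1) / 2) + \<alpha> * of_int r \<ge> \<bar>of_int r\<bar> - ((\<bar>\<alpha> - of_int a/2\<bar> + 1)^2 / 2)"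
    by (rule quad_aux2) (use assms in simp)
  moreover have "of_int c * (of_int s * (of_int s - 1) / 2) + \<beta> * of_int s \<ge> \<bar>of_int s\<bar> - ((\<bar>\<beta> - of_int c/2\<bar> + 1)^2 / 2)"
    by (rule quad_aux2) (use assms in simp)
  ultimately show ?thesis by linarith
qed

lemma h_summable:
  fixes d :: real assumes "d > 0"
  shows "(\<lambda>r::int. exp (- d * \<bar>of_int r\<bar>)) summable_on UNIV"
proof -
  let ?h = "\<lambda>r::int. exp (- d * \<bar>of_int r\<bar>)"
  have g: "(\<lambda>n::nat. exp (-d) ^ n) summable_on UNIV"
    by (subst summable_on_UNIV_nonneg_real_iff) (auto intro!: summable_geometric simp: assms)
  have inj1: "inj_on int UNIV" by (simp add: inj_on_def)
  have e1: "(?h \<circ> int) = (\<lambda>n::nat. exp (-d) ^ n)"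
    by (auto simp: fun_eq_iff exp_of_nat_mult[symmetric] mult.commute)
  have A: "?h summable_on (range int)"
    using summable_on_reindex[OF inj1, of ?h] e1 g by simp
  have inj2: "inj_on (\<lambda>n::nat. - int n - 1) UNIV" by (simp add: inj_on_def)
  have e2: "(?h \<circ> (\<lambda>n::nat. - int n - 1)) = (\<lambda>n::nat. exp (-d) ^ n * exp (-d))"
  proof
    fix n :: nat
    have "\<bar>of_int (- int n - 1)\<bar> = (real n + 1 :: real)" by simp
    then show "(?h \<circ> (\<lambda>n::nat. - int n - 1)) n = exp (-d) ^ n * exp (-d)"
      by (simp add: exp_of_nat_mult[symmetric] exp_add[symmetric] algebra_simps)
  qed
  have B: "?h summable_on (range (\<lambda>n::nat. - int n - 1))"
    using summable_on_reindex[OF inj2, of ?h] e2 summable_on_cmult_left[OF g, of "exp (-d)"] by simp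
  have U: "range int \<union> range (\<lambda>n::nat. - int n - 1) = UNIV"
  proof -
    have "r \<in> range int \<union> range (\<lambda>n::nat. - int n - 1)" for r :: int
    proof (cases "r \<ge> 0")
      case True then have "r = int (nat r)" by simp
      then show ?thesis by blast
    next
      case False then have "r = - int (nat (- r - 1)) - 1" by simp
      then show ?thesis by blast
    qed
    then show ?thesis by blast
  qed
  show ?thesis using summable_on_union[OF A B] U by simp
qed

lemma G_summable:
  fixes d :: real assumes "d > 0"
  shows "(\<lambda>(r::int, s::int). exp (- d * \<bar>of_int r\<bar>) * exp (- d * \<bar>of_int s\<bar>)) summable_on UNIV"
proof -
  define h where "h = (\<lambda>r::int. exp (- d * \<bar>of_int r\<bar>))"
  have h: "h summable_on UNIV" unfolding h_def by (rule h_summable[OF assms])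
  have hpos: "h r > 0" for r unfolding h_def by simp
  have S0: "infsum h UNIV \<ge> 0" by (rule infsum_nonneg) (simp add: hpos less_imp_le)
  have n1: "norm (h x * h y) = h x * h y" "\<bar>h x * h y\<bar> = h x * h y" for x y using hpos by (simp_all add: abs_mult abs_of_pos)
  have 1: "\<forall>x\<in>UNIV. Infinite_Sum.abs_summable_on (\<lambda>y. (\<lambda>(r,s). h r * h s) (x,y)) UNIV"
    using summable_on_cmult_right[OF h] by (simp add: n1)
  have e: "(\<lambda>x. infsum (\<lambda>y. norm ((\<lambda>(r,s). h r * h s) (x,y))) UNIV) = (\<lambda>x. h x * infsum h UNIV)"
  proof
    fix x
    show "infsum (\<lambda>y. norm ((\<lambda>(r,s). h r * h s) (x,y))) UNIV = h x * infsum h UNIV"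
      using infsum_cmult_right[of "h x" h UNIV] h by (simp add: n1)
  qed
  have e': "(\<Sum>\<^sub>\<infinity>y. h x * h y) = h x * infsum h UNIV" for x
    by (rule infsum_cmult_right) (use h in simp)
  have n2: "norm (h x * infsum h UNIV) = h x * infsum h UNIV" "\<bar>h x * infsum h UNIV\<bar> = h x * infsum h UNIV" for x
    using hpos S0 by (simp_all add: abs_mult abs_of_pos)
  have 2: "Infinite_Sum.abs_summable_on (\<lambda>x. infsum (\<lambda>y. norm ((\<lambda>(r,s). h r * h s) (x,y))) UNIV) UNIV"
  proof -
    have "(\<lambda>x. norm (infsum (\<lambda>y. norm ((\<lambda>(r,s). h r * h s) (x,y))) UNIV)) = (\<lambda>x. h x * infsum h UNIV)"
      by (rule ext) (simp only: prod.case n1(1) e' n2(1))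
    then show ?thesis using summable_on_cmult_left[OF h, of "infsum h UNIV"] by (simp only:)
  qed
  have "Infinite_Sum.abs_summable_on (\<lambda>(r,s). h r * h s) (Sigma UNIV (\<lambda>_. UNIV))"
    by (rule iffD2[OF Infinite_Sum.abs_summable_on_Sigma_iff], rule conjI[OF 1 2])
  then have "(\<lambda>(r,s). h r * h s) summable_on (Sigma UNIV (\<lambda>_. UNIV))"
    by (rule abs_summable_summable)
  then show ?thesis by (simp add: h_def)
qed

lemma term_summable:
  fixes z :: complex and a b c :: int and \<alpha> \<beta> :: real
  assumes "Re z < 0" "a \<ge> 1" "c \<ge> 1" "b \<ge> 0"
  shows "hecke_term a b c (exp (z * of_real \<alpha>)) (exp (z * of_real \<beta>)) (exp z) summable_on {p. fst p * snd p \<ge> 0}"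
proof -
  define d where "d = - Re z"
  have d: "d > 0" using assms(1) by (simp add: d_def)
  define C where "C = (\<bar>\<alpha> - of_int a/2\<bar> + 1)^2 / 2 + (\<bar>\<beta> - of_int c/2\<bar> + 1)^2 / 2"
  define G where "G = (\<lambda>(r::int, s::int). exp (d * C) * (exp (- d * \<bar>of_int r\<bar>) * exp (- d * \<bar>of_int s\<bar>)))"
  have Gs: "G summable_on UNIV"
    unfolding G_def using summable_on_cmult_right[OF G_summable[OF d], of "exp (d * C)"]
    by (simp add: case_prod_unfold)
  have Gn: "norm (G p) = G p" "\<bar>G p\<bar> = G p" for p by (simp_all add: G_def case_prod_unfold)
  have Gabs: "Infinite_Sum.abs_summable_on G {p. fst p * snd p \<ge> 0}"
    using summable_on_subset[OF Gs, of "{p. fst p * snd p \<ge> 0}"] by (simp add: Gn)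
  have bound: "norm (hecke_term a b c (exp (z * of_real \<alpha>)) (exp (z * of_real \<beta>)) (exp z) p) \<le> norm (G p)"
    if "p \<in> {p. fst p * snd p \<ge> 0}" for p
  proof -
    obtain r s where p: "p = (r, s)" by (cases p)
    have rs: "r * s \<ge> 0" using that p by simp
    define E where "E = \<alpha> * of_int r + \<beta> * of_int s
       + of_int a * (of_int r * (of_int r - 1) / 2) + of_int b * of_int r * of_int s
       + of_int c * (of_int s * (of_int s - 1) / 2)"
    have EB: "E \<ge> \<bar>of_int r\<bar> + \<bar>of_int s\<bar> - C"
      unfolding E_def C_def using E_bound[OF assms(2,3,4) rs, of \<alpha> \<beta>] by simp
    have n1: "norm ((-1::complex) powi (r + s)) = 1" by (simp add: norm_power_int)
    have "norm (hecke_term a b c (exp (z * of_real \<alpha>)) (exp (z * of_real \<beta>)) (exp z) p)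
        = norm ((-1::complex) powi (r + s)) * norm (exp (z * of_real E))"
      unfolding p term_eq E_def[symmetric] by (rule norm_mult)
    also have "\<dots> = exp (Re z * E)"
    proof -
      have "Re (z * of_real E) = Re z * E" by simp
      then show ?thesis by (simp only: n1 norm_exp_eq_Re mult_1_left)
    qed
    also have "\<dots> \<le> exp (- d * (\<bar>of_int r\<bar> + \<bar>of_int s\<bar> - C))"
    proof -
      have "d * (\<bar>of_int r\<bar> + \<bar>of_int s\<bar> - C) \<le> d * E"
        by (rule mult_left_mono[OF EB]) (use d in simp)
      then have "Re z * E \<le> - d * (\<bar>of_int r\<bar> + \<bar>of_int s\<bar> - C)" by (simp add: d_def)
      then show ?thesis by simp
    qed
    also have "\<dots> = G p"
    proof -
      have "G p = exp (d * C + (- d * \<bar>of_int r\<bar> + - d * \<bar>of_int s\<bar>))"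
        by (simp only: G_def p prod.case exp_add)
      also have "d * C + (- d * \<bar>of_int r\<bar> + - d * \<bar>of_int s\<bar>) = - d * (\<bar>of_int r\<bar> + \<bar>of_int s\<bar> - C)"
        by (simp add: algebra_simps)
      finally show ?thesis by simp
    qed
    finally show ?thesis by (simp add: Gn)
  qed
  have "Infinite_Sum.abs_summable_on (hecke_term a b c (exp (z * of_real \<alpha>)) (exp (z * of_real \<beta>)) (exp z)) {p. fst p * snd p \<ge> 0}"
    by (rule Infinite_Sum.abs_summable_on_comparison_test[OF Gabs bound])
  then show ?thesis by (rule abs_summable_summable)
qed

lemma m1_shift: "((-1::complex) powi (n + 1 + 2 * k)) = - ((-1) powi n)"
proof -
  have "(-1::complex) powi (n + 1 + 2 * k) = (-1) powi n * (-1) powi 1 * (-1) powi (2 * k)"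
    by (simp add: power_int_add)
  also have "(-1::complex) powi (2 * k) = 1"
    by (simp add: power_int_mult)
  finally show ?thesis by simp
qed

lemma set_A:
  "{(u::int, v::int). 0 \<le> u \<and> 0 \<le> v} =
     (\<lambda>(r, s). (2 * s, r - s)) ` {(r, s). 0 \<le> s \<and> s \<le> r} \<union>
     (\<lambda>(r, s). (- 2 * r - 1, r - s)) ` {(r, s). r < 0 \<and> s \<le> r}"
proof (rule set_eqI, rule iffI)
  fix p assume "p \<in> {(u::int, v::int). 0 \<le> u \<and> 0 \<le> v}"
  then obtain u v where p: "p = (u, v)" "0 \<le> u" "0 \<le> v" by auto
  show "p \<in> (\<lambda>(r, s). (2 * s, r - s)) ` {(r, s). 0 \<le> s \<and> s \<le> r} \<union>
     (\<lambda>(r, s). (- 2 * r - 1, r - s)) ` {(r, s). r < 0 \<and> s \<le> r}"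
  proof (cases "even u")
    case True
    then obtain k where k: "u = 2 * k" by auto
    have "p = (\<lambda>(r, s). (2 * s, r - s)) (v + k, k)" using p k by simp
    moreover have "(v + k, k) \<in> {(r, s). 0 \<le> s \<and> s \<le> r}" using p k by simp
    ultimately show ?thesis by blast
  next
    case False
    then obtain k where k: "u = 2 * k + 1" by (metis oddE)
    have "p = (\<lambda>(r, s). (- 2 * r - 1, r - s)) (- k - 1, - k - 1 - v)" using p k by simp
    moreover have "(- k - 1, - k - 1 - v) \<in> {(r, s). r < 0 \<and> s \<le> r}" using p k by simp
    ultimately show ?thesis by blast
  qed
next
  fix p assume "p \<in> (\<lambda>(r::int, s::int). (2 * s, r - s)) ` {(r, s). 0 \<le> s \<and> s \<le> r} \<union>
     (\<lambda>(r, s). (- 2 * r - 1, r - s)) ` {(r, s). r < 0 \<and> s \<le> r}"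
  then show "p \<in> {(u::int, v::int). 0 \<le> u \<and> 0 \<le> v}" by auto
qed

lemma set_B:
  "{(u::int, v::int). u < 0 \<and> v < 0} =
     (\<lambda>(r, s). (2 * s, r - s)) ` {(r, s). s < 0 \<and> r < s} \<union>
     (\<lambda>(r, s). (- 2 * r - 1, r - s)) ` {(r, s). 0 \<le> r \<and> r < s}"
proof (rule set_eqI, rule iffI)
  fix p assume "p \<in> {(u::int, v::int). u < 0 \<and> v < 0}"
  then obtain u v where p: "p = (u, v)" "u < 0" "v < 0" by auto
  show "p \<in> (\<lambda>(r, s). (2 * s, r - s)) ` {(r, s). s < 0 \<and> r < s} \<union>
     (\<lambda>(r, s). (- 2 * r - 1, r - s)) ` {(r, s). 0 \<le> r \<and> r < s}"
  proof (cases "even u")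
    case True
    then obtain k where k: "u = 2 * k" by auto
    have "p = (\<lambda>(r, s). (2 * s, r - s)) (v + k, k)" using p k by simp
    moreover have "(v + k, k) \<in> {(r, s). s < 0 \<and> r < s}" using p k by simp
    ultimately show ?thesis by blast
  next
    case False
    then obtain k where k: "u = 2 * k + 1" by (metis oddE)
    have "p = (\<lambda>(r, s). (- 2 * r - 1, r - s)) (- k - 1, - k - 1 - v)" using p k by simp
    moreover have "(- k - 1, - k - 1 - v) \<in> {(r, s). 0 \<le> r \<and> r < s}" using p k by simp
    ultimately show ?thesis by blast
  qed
next
  fix p assume "p \<in> (\<lambda>(r::int, s::int). (2 * s, r - s)) ` {(r, s). s < 0 \<and> r < s} \<union>
     (\<lambda>(r, s). (- 2 * r - 1, r - s)) ` {(r, s). 0 \<le> r \<and> r < s}"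
  then show "p \<in> {(u::int, v::int). u < 0 \<and> v < 0}" by auto
qed

lemma inj_phi: "inj_on (\<lambda>(r::int, s::int). (2 * s, r - s)) X"
  by (auto simp: inj_on_def)
lemma inj_psi: "inj_on (\<lambda>(r::int, s::int). (- 2 * r - 1, r - s)) X"
  by (auto simp: inj_on_def)

lemma disj_phi_psi: "(\<lambda>(r::int, s::int). (2 * s, r - s)) ` X \<inter> (\<lambda>(r, s). (- 2 * r - 1, r - s)) ` Y = {}"
proof -
  have "2 * s \<noteq> - 2 * r - 1" for r s :: int by presburger
  then show ?thesis by auto
qed

lemma TR_phi:
  fixes z :: complex and K r s :: int and \<alpha> \<beta> :: real
  assumes "\<alpha> + \<beta> = of_int K + 2"
  shows "hecke_term (K + 1) (K + 1) 1 (exp (z * of_real (of_int K + 1))) (exp (z * of_real \<alpha>)) (exp z) (2 * s, r - s)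
       = hecke_term 1 (1 + 2 * K) 1 (exp (z * of_real \<alpha>)) (exp (z * of_real \<beta>)) (exp z) (r, s)"
proof -
  have sg: "2 * s + (r - s) = r + s" by simp
  have ex: "(of_int K + 1) * of_int (2 * s) + \<alpha> * of_int (r - s)
       + of_int (K + 1) * (of_int (2 * s) * (of_int (2 * s) - 1) / 2) + of_int (K + 1) * of_int (2 * s) * of_int (r - s)
       + of_int 1 * (of_int (r - s) * (of_int (r - s) - 1) / 2)
     = \<alpha> * of_int r + \<beta> * of_int s
       + of_int 1 * (of_int r * (of_int r - 1) / 2) + of_int (1 + 2 * K) * of_int r * of_int s
       + of_int 1 * (of_int s * (of_int s - 1) / 2)"
  proof -
    have b: "\<beta> = of_int K + 2 - \<alpha>" using assms by simp
    show ?thesis unfolding b by (simp add: field_simps)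
  qed
  show ?thesis unfolding term_eq sg ex by (rule refl)
qed

lemma TR_psi:
  fixes z :: complex and K r s :: int and \<alpha> \<beta> :: real
  assumes "\<alpha> + \<beta> = of_int K + 2"
  shows "hecke_term (K + 1) (K + 1) 1 (exp (z * of_real (of_int K + 1))) (exp (z * of_real \<alpha>)) (exp z) (- 2 * r - 1, r - s)
       = - hecke_term 1 (1 + 2 * K) 1 (exp (z * of_real \<alpha>)) (exp (z * of_real \<beta>)) (exp z) (r, s)"
proof -
  have sg: "- 2 * r - 1 + (r - s) = (r + s) + 1 + 2 * (- r - s - 1)" by simp
  have ex: "(of_int K + 1) * of_int (- 2 * r - 1) + \<alpha> * of_int (r - s)
       + of_int (K + 1) * (of_int (- 2 * r - 1) * (of_int (- 2 * r - 1) - 1) / 2) + of_int (K + 1) * of_int (- 2 * r - 1) * of_int (r - s)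
       + of_int 1 * (of_int (r - s) * (of_int (r - s) - 1) / 2)
     = \<alpha> * of_int r + \<beta> * of_int s
       + of_int 1 * (of_int r * (of_int r - 1) / 2) + of_int (1 + 2 * K) * of_int r * of_int s
       + of_int 1 * (of_int s * (of_int s - 1) / 2)"
  proof -
    have b: "\<beta> = of_int K + 2 - \<alpha>" using assms by simp
    show ?thesis unfolding b by (simp add: field_simps)
  qed
  show ?thesis unfolding term_eq sg ex m1_shift by (rule minus_mult_left[symmetric])
qed

theorem corollary1p2:
  fixes K m :: int and \<tau> :: complex
  assumes "Im \<tau> > 0" and "K > 0" and "m mod 2 = K mod 2"
  shows "string_fn (2 * K) m K \<tau> =
    qpow \<tau> (sfun m K (2 * K)) / (J1 (nome \<tau>)) ^ 3 *
    hecke_f (K + 1) (K + 1) 1 (qpow \<tau> (real_of_int K + 1))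
      (qpow \<tau> (1 + (real_of_int m + real_of_int K) / 2)) (nome \<tau>)"
proof -
  define z where "z = 2 * complex_of_real pi * \<i> * \<tau>"
  have Rez: "Re z < 0" using assms(1) by (simp add: z_def)
  define \<alpha> where "\<alpha> = 1 + (real_of_int m + real_of_int K) / 2"
  define \<beta> where "\<beta> = 1 - (real_of_int m - real_of_int K) / 2"
  have ab: "\<alpha> + \<beta> = of_int K + 2" by (simp add: \<alpha>_def \<beta>_def field_simps)
  have X: "qpow \<tau> (1 + (real_of_int m + real_of_int K) / 2) = exp (z * of_real \<alpha>)"
    by (simp add: qpow_def z_def \<alpha>_def mult_ac)
  have Y: "qpow \<tau> (1 - (real_of_int m - real_of_int K) / 2) = exp (z * of_real \<beta>)"
    by (simp add: qpow_def z_def \<beta>_def mult_ac)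
  have Z: "qpow \<tau> (real_of_int K + 1) = exp (z * of_real (of_int K + 1))"
    by (simp add: qpow_def z_def mult_ac)
  have Q: "nome \<tau> = exp z" by (simp add: nome_def z_def)
  define TL where "TL = hecke_term 1 (1 + 2 * K) 1 (exp (z * of_real \<alpha>)) (exp (z * of_real \<beta>)) (exp z)"
  define TR where "TR = hecke_term (K + 1) (K + 1) 1 (exp (z * of_real (of_int K + 1))) (exp (z * of_real \<alpha>)) (exp z)"
  define \<phi> where "\<phi> = (\<lambda>(r::int, s::int). (2 * s, r - s))"
  define \<psi> where "\<psi> = (\<lambda>(r::int, s::int). (- 2 * r - 1, r - s))"
  have TR\<phi>: "TR \<circ> \<phi> = TL"
  proof
    fix p :: "int \<times> int"
    obtain r s where p: "p = (r, s)" by (cases p)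
    show "(TR \<circ> \<phi>) p = TL p"
      unfolding p TR_def TL_def \<phi>_def comp_def prod.case by (rule TR_phi[OF ab])
  qed
  have TR\<psi>: "TR \<circ> \<psi> = (\<lambda>p. - TL p)"
  proof
    fix p :: "int \<times> int"
    obtain r s where p: "p = (r, s)" by (cases p)
    show "(TR \<circ> \<psi>) p = - TL p"
      unfolding p TR_def TL_def \<psi>_def comp_def prod.case by (rule TR_psi[OF ab])
  qed
  have sL: "TL summable_on {p. fst p * snd p \<ge> 0}"
    unfolding TL_def by (rule term_summable[OF Rez]) (use assms(2) in simp_all)
  define P1 where "P1 = {(r::int, s::int). 0 \<le> s \<and> s \<le> r}"
  define P2 where "P2 = {(r::int, s::int). 0 \<le> r \<and> r < s}"
  define N1 where "N1 = {(r::int, s::int). s < 0 \<and> r < s}"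
  define N2 where "N2 = {(r::int, s::int). r < 0 \<and> s \<le> r}"
  have sub: "P1 \<subseteq> {p. fst p * snd p \<ge> 0}" "P2 \<subseteq> {p. fst p * snd p \<ge> 0}"
            "N1 \<subseteq> {p. fst p * snd p \<ge> 0}" "N2 \<subseteq> {p. fst p * snd p \<ge> 0}"
    by (auto simp: P1_def P2_def N1_def N2_def zero_le_mult_iff)
  have sP1: "TL summable_on P1" using summable_on_subset[OF sL sub(1)] .
  have sP2: "TL summable_on P2" using summable_on_subset[OF sL sub(2)] .
  have sN1: "TL summable_on N1" using summable_on_subset[OF sL sub(3)] .
  have sN2: "TL summable_on N2" using summable_on_subset[OF sL sub(4)] .
  have ij\<phi>: "inj_on \<phi> X" for X unfolding \<phi>_def by (rule inj_phi)
  have ij\<psi>: "inj_on \<psi> X" for X unfolding \<psi>_def by (rule inj_psi)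
  have dj: "\<phi> ` X \<inter> \<psi> ` Y = {}" for X Y unfolding \<phi>_def \<psi>_def by (rule disj_phi_psi)
  have r\<phi>: "infsum TR (\<phi> ` X) = infsum TL X" for X
    using infsum_reindex[OF ij\<phi>, of TR X] TR\<phi> by simp
  have s\<phi>: "TR summable_on (\<phi> ` X)" if "TL summable_on X" for X
    using summable_on_reindex[OF ij\<phi>, of TR X] TR\<phi> that by simp
  have r\<psi>: "infsum TR (\<psi> ` X) = - infsum TL X" for X
    using infsum_reindex[OF ij\<psi>, of TR X] TR\<psi> infsum_uminus[of TL X] by simp
  have s\<psi>: "TR summable_on (\<psi> ` X)" if "TL summable_on X" for X
    using summable_on_reindex[OF ij\<psi>, of TR X] TR\<psi> summable_on_uminus[of TL X] that by simp
  have A: "{(u::int, v::int). 0 \<le> u \<and> 0 \<le> v} = \<phi> ` P1 \<union> \<psi> ` N2"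
    unfolding \<phi>_def \<psi>_def P1_def N2_def by (rule set_A)
  have B: "{(u::int, v::int). u < 0 \<and> v < 0} = \<phi> ` N1 \<union> \<psi> ` P2"
    unfolding \<phi>_def \<psi>_def N1_def P2_def by (rule set_B)
  have P: "{(r::int, s::int). 0 \<le> r \<and> 0 \<le> s} = P1 \<union> P2" by (auto simp: P1_def P2_def)
  have N: "{(r::int, s::int). r < 0 \<and> s < 0} = N1 \<union> N2" by (auto simp: N1_def N2_def)
  have dP: "P1 \<inter> P2 = {}" by (auto simp: P1_def P2_def)
  have dN: "N1 \<inter> N2 = {}" by (auto simp: N1_def N2_def)
  have RA: "infsum TR {(u::int, v::int). 0 \<le> u \<and> 0 \<le> v} = infsum TL P1 - infsum TL N2"
  proof -
    have "infsum TR (\<phi> ` P1 \<union> \<psi> ` N2) = infsum TR (\<phi> ` P1) + infsum TR (\<psi> ` N2)"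
      by (rule infsum_Un_disjoint[OF s\<phi>[OF sP1] s\<psi>[OF sN2] dj])
    then show ?thesis unfolding A r\<phi> r\<psi> by (simp only: diff_conv_add_uminus)
  qed
  have RB: "infsum TR {(u::int, v::int). u < 0 \<and> v < 0} = infsum TL N1 - infsum TL P2"
  proof -
    have "infsum TR (\<phi> ` N1 \<union> \<psi> ` P2) = infsum TR (\<phi> ` N1) + infsum TR (\<psi> ` P2)"
      by (rule infsum_Un_disjoint[OF s\<phi>[OF sN1] s\<psi>[OF sP2] dj])
    then show ?thesis unfolding B r\<phi> r\<psi> by (simp only: diff_conv_add_uminus)
  qed
  have LP: "infsum TL {(r::int, s::int). 0 \<le> r \<and> 0 \<le> s} = infsum TL P1 + infsum TL P2"
    unfolding P by (rule infsum_Un_disjoint[OF sP1 sP2 dP])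
  have LN: "infsum TL {(r::int, s::int). r < 0 \<and> s < 0} = infsum TL N1 + infsum TL N2"
    unfolding N by (rule infsum_Un_disjoint[OF sN1 sN2 dN])
  have key: "hecke_f 1 (1 + 2 * K) 1 (exp (z * of_real \<alpha>)) (exp (z * of_real \<beta>)) (exp z)
      = hecke_f (K + 1) (K + 1) 1 (exp (z * of_real (of_int K + 1))) (exp (z * of_real \<alpha>)) (exp z)"
  proof -
    have "hecke_f 1 (1 + 2 * K) 1 (exp (z * of_real \<alpha>)) (exp (z * of_real \<beta>)) (exp z)
        = infsum TL {(r::int, s::int). 0 \<le> r \<and> 0 \<le> s} - infsum TL {(r::int, s::int). r < 0 \<and> s < 0}"
      unfolding hecke_f_def TL_def ..
    moreover have "hecke_f (K + 1) (K + 1) 1 (exp (z * of_real (of_int K + 1))) (exp (z * of_real \<alpha>)) (exp z)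
        = infsum TR {(r::int, s::int). 0 \<le> r \<and> 0 \<le> s} - infsum TR {(r::int, s::int). r < 0 \<and> s < 0}"
      unfolding hecke_f_def TR_def ..
    moreover have E: "(infsum TL P1 + infsum TL P2) - (infsum TL N1 + infsum TL N2) = (infsum TL P1 - infsum TL N2) - (infsum TL N1 - infsum TL P2)"
      by (simp add: algebra_simps)
    ultimately show ?thesis unfolding RA RB LP LN by (simp only:)
  qed
  show ?thesis
    unfolding string_fn_def X Y Z Q key ..
qed

end
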